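(* Let $\pi$ be a finitely refining sequence of partitions of $[0,1]$. Then for all $n\ge1$, $m\le n-1$ and $k$, $$\underline{\pi^n}\le a^n_{m,k}(1)\le|\pi^n|.$$ If moreover $\pi$ is balanced, there is a constant $C<\infty$ (depending only on $\pi$) such that for all $n\ge1$ and all distinct $(m,k),(m',k')$ with $m,m'\le n-1$ and $[t^{m,k}_1,t^{m,k}_3]\subseteq[t^{m',k'}_1,t^{m',k'}_3]$, $$|b^n_{m,k,m',k'}(1)|\le C\,(|\pi^n|-\underline{\pi^n})\sqrt{|\pi^m|/|\pi^{m'}|},$$ while $b^n_{m,k,m',k'}(1)=0$ if the supports of $e^\pi_{m,k}$ and $e^\pi_{m',k'}$ have disjoint interiors.
   Context: A partition of $[0,1]$ is a finite set $\{0=t_0<t_1<\dots<t_N=1\}$; for a partition $\pi^n=\{0=t^n_0<\dots<t^n_{N(\pi^n)}=1\}$, $N(\pi^n)$ is its number of intervals, $|\pi^n|=\max_i(t^n_{i+1}-t^n_i)$ and $\underline{\pi^n}=\min_i(t^n_{i+1}-t^n_i)$. A sequence $\pi=(\pi^n)_{n\ge0}$ of partitions of $[0,1]$, with the convention $\pi^0=\{0,1\}$, is finitely refining if $\pi^n\subseteq\pi^{n+1}$ for all $n$, $|\pi^n|\to0$, and there is $M<\infty$ such that for every $n$ each interval $[t^n_i,t^n_{i+1}]$ contains at most $M$ points of $\pi^{n+1}$. It is balanced if $\sup_{n\ge1}|\pi^n|/\underline{\pi^n}<\infty$. Haar and Schauder functions of a finitely refining $\pi$: for each level $m\ge0$ and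 each interval $[u_0,u_r]$ of $\pi^m$, let $u_0<u_1<\dots<u_r$ be the points of $\pi^{m+1}$ lying in $[u_0,u_r]$. For each $i\in\{2,\dots,r\}$ put $t_1=u_0$, $t_2=u_{i-1}$, $t_3=u_i$ and define $\psi(s)=\sqrt{\frac{t_3-t_2}{(t_2-t_1)(t_3-t_1)}}$ for $s\in[t_1,t_2)$, $\psi(s)=-\sqrt{\frac{t_2-t_1}{(t_3-t_2)(t_3-t_1)}}$ for $s\in[t_2,t_3)$, $\psi(s)=0$ otherwise, and $e(t)=\int_0^t\psi(s)\,ds$ (a continuous hat function vanishing outside $[t_1,t_3]$, affine on $[t_1,t_2]$ and on $[t_2,t_3]$, maximal at $t_2$). Ranging over all intervals of $\pi^m$ and all such $i$ gives $N(\pi^{m+1})-N(\pi^m)$ functions at level $m$, enumerated in a fixed order as $\psi_{m,k}$, $e^\pi_{m,k}$, $k=0,\dots,N(\pi^{m+1})-N(\pi^m)-1$, with associated points $t^{m,k}_1<t^{m,k}_2<t^{m,k}_3$ (so $[t^{m,k}_1,t^{m,k}_3]$ is the support of $e^\pi_{m,k}$ and $t^{m,k}_2$ its maximum point). Coefficients: for $n\ge1$, $t\in[0,1]$, let $\Delta t^n_i=t^n_{i+1}\wedge t-t^n_i\wedge t$. For $m\le n-1$ and each $k$, with $t_j=t^{m,k}_j$, let $S_1=\sum_{i:[t^n_i,t^n_{i+1}]\subseteq[t_1,t_2]}(\Delta t^n_i)^2$, $S_2=\sum_{i:[t^n_i,t^n_{i+1}]\subseteq[t_2,t_3]}(\Delta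 t^n_i)^2$ and $a^n_{m,k}(t)=\frac{1}{t_3-t_1}\Big(S_1\frac{t_3-t_2}{t_2-t_1}+S_2\frac{t_2-t_1}{t_3-t_2}\Big)$. For distinct $(m,k),(m',k')$ with $m,m'\le n-1$: if $[t^{m,k}_1,t^{m,k}_3]\subseteq[t^{m',k'}_1,t^{m',k'}_3]$, set $b^n_{m,k,m',k'}(t)=\psi_{m',k'}(t^{m,k}_1)\Big(\frac{S_1}{t_2-t_1}-\frac{S_2}{t_3-t_2}\Big)\sqrt{\frac{(t_2-t_1)(t_3-t_2)}{t_3-t_1}}$ (with $S_1,S_2,t_j$ computed for $(m,k)$) and set $b^n_{m',k',m,k}(t)=b^n_{m,k,m',k'}(t)$; if neither support contains the other, set $b^n_{m,k,m',k'}(t)=0$. (Two distinct supports are always either nested or have disjoint interiors.) *)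

theory Defs
  imports Complex_Main
begin

definition is_partition :: "real set \<Rightarrow> bool" where
  "is_partition P \<longleftrightarrow> finite P \<and> 0 \<in> P \<and> 1 \<in> P \<and> P \<subseteq> {0..1}"

definition intervals :: "real set \<Rightarrow> (real \<times> real) set" where
  "intervals P = {(a, b). a \<in> P \<and> b \<in> P \<and> a < b \<and> (\<forall>x\<in>P. x \<le> a \<or> b \<le> x)}"

definition mesh :: "real set \<Rightarrow> real" where
  "mesh P = Max ((\<lambda>(a, b). b - a) ` intervals P)"

definition minmesh :: "real set \<Rightarrow> real" where
  "minmesh P = Min ((\<lambda>(a, b). b - a) ` intervals P)"

definition finitely_refining :: "(nat \<Rightarrow> real set) \<Rightarrow> bool" where
  "finitely_refining \<pi> \<longleftrightarrow>
     (\<forall>n. is_partition (\<pi> n)) \<and> \<pi> 0 = {0, 1} \<and>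
     (\<forall>n. \<pi> n \<subseteq> \<pi> (Suc n)) \<and>
     (\<lambda>n. mesh (\<pi> n)) \<longlonglongrightarrow> 0 \<and>
     (\<exists>M::nat. \<forall>n. \<forall>(a, b) \<in> intervals (\<pi> n).
         card {x \<in> \<pi> (Suc n). a \<le> x \<and> x \<le> b} \<le> M)"

definition balanced :: "(nat \<Rightarrow> real set) \<Rightarrow> bool" where
  "balanced \<pi> \<longleftrightarrow> (\<exists>B. \<forall>n\<ge>1. mesh (\<pi> n) / minmesh (\<pi> n) \<le> B)"

(* Haar/Schauder functions at level m are indexed by their triples (t1,t2,t3):
   t1 = u_0 left endpoint of an interval [u_0,u_r] of pi^m, (t2,t3) = (u_{i-1},u_i)
   consecutive points of pi^(m+1) inside [u_0,u_r] with i >= 2 (i.e. t1 < t2). *)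
definition haar_triples :: "(nat \<Rightarrow> real set) \<Rightarrow> nat \<Rightarrow> (real \<times> real \<times> real) set" where
  "haar_triples \<pi> m = {(t1, t2, t3). \<exists>b. (t1, b) \<in> intervals (\<pi> m) \<and>
       (t2, t3) \<in> intervals (\<pi> (Suc m)) \<and> t1 < t2 \<and> t3 \<le> b}"

definition tt1 :: "real \<times> real \<times> real \<Rightarrow> real" where "tt1 \<tau> = fst \<tau>"
definition tt2 :: "real \<times> real \<times> real \<Rightarrow> real" where "tt2 \<tau> = fst (snd \<tau>)"
definition tt3 :: "real \<times> real \<times> real \<Rightarrow> real" where "tt3 \<tau> = snd (snd \<tau>)"

definition haar_psi :: "real \<times> real \<times> real \<Rightarrow> real \<Rightarrow> real" where
  "haar_psi \<tau> s =
     (if tt1 \<tau> \<le> s \<and> s < tt2 \<tau> then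
        sqrt ((tt3 \<tau> - tt2 \<tau>) / ((tt2 \<tau> - tt1 \<tau>) * (tt3 \<tau> - tt1 \<tau>)))
      else if tt2 \<tau> \<le> s \<and> s < tt3 \<tau> then
        - sqrt ((tt2 \<tau> - tt1 \<tau>) / ((tt3 \<tau> - tt2 \<tau>) * (tt3 \<tau> - tt1 \<tau>)))
      else 0)"

definition incr :: "real \<Rightarrow> real \<Rightarrow> real \<Rightarrow> real" where
  "incr t a b = min b t - min a t"

definition Ssum :: "(nat \<Rightarrow> real set) \<Rightarrow> nat \<Rightarrow> real \<Rightarrow> real \<Rightarrow> real \<Rightarrow> real" where
  "Ssum \<pi> n t l r = (\<Sum>(a, b) \<in> {(a, b) \<in> intervals (\<pi> n). l \<le> a \<and> b \<le> r}. (incr t a b)\<^sup>2)"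

definition acoef :: "(nat \<Rightarrow> real set) \<Rightarrow> nat \<Rightarrow> real \<times> real \<times> real \<Rightarrow> real \<Rightarrow> real" where
  "acoef \<pi> n \<tau> t =
     1 / (tt3 \<tau> - tt1 \<tau>) *
     (Ssum \<pi> n t (tt1 \<tau>) (tt2 \<tau>) * (tt3 \<tau> - tt2 \<tau>) / (tt2 \<tau> - tt1 \<tau>) +
      Ssum \<pi> n t (tt2 \<tau>) (tt3 \<tau>) * (tt2 \<tau> - tt1 \<tau>) / (tt3 \<tau> - tt2 \<tau>))"

definition bform :: "(nat \<Rightarrow> real set) \<Rightarrow> nat \<Rightarrow> real \<times> real \<times> real \<Rightarrow> real \<times> real \<times> real \<Rightarrow> real \<Rightarrow> real" where
  "bform \<pi> n \<tau> \<sigma> t =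
     haar_psi \<sigma> (tt1 \<tau>) *
     (Ssum \<pi> n t (tt1 \<tau>) (tt2 \<tau>) / (tt2 \<tau> - tt1 \<tau>) -
      Ssum \<pi> n t (tt2 \<tau>) (tt3 \<tau>) / (tt3 \<tau> - tt2 \<tau>)) *
     sqrt ((tt2 \<tau> - tt1 \<tau>) * (tt3 \<tau> - tt2 \<tau>) / (tt3 \<tau> - tt1 \<tau>))"

definition bcoef :: "(nat \<Rightarrow> real set) \<Rightarrow> nat \<Rightarrow> real \<times> real \<times> real \<Rightarrow> real \<times> real \<times> real \<Rightarrow> real \<Rightarrow> real" where
  "bcoef \<pi> n \<tau> \<sigma> t =
     (if {tt1 \<tau>..tt3 \<tau>} \<subseteq> {tt1 \<sigma>..tt3 \<sigma>} then bform \<pi> n \<tau> \<sigma> t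
      else if {tt1 \<sigma>..tt3 \<sigma>} \<subseteq> {tt1 \<tau>..tt3 \<tau>} then bform \<pi> n \<sigma> \<tau> t
      else 0)"

end

theory Submission
  imports Defs
begin

lemma intervals_finite: "finite P \<Longrightarrow> finite (intervals P)"
  by (rule finite_subset[of _ "P \<times> P"]) (auto simp: intervals_def)

lemma intervals_sum:
  assumes "finite P" "l \<in> P" "r \<in> P" "l \<le> r"
  shows "(\<Sum>(a,b) \<in> {(a,b) \<in> intervals P. l \<le> a \<and> b \<le> r}. b - a) = r - l"
  using assms
proof (induction "card {x\<in>P. l \<le> x \<and> x < r}" arbitrary: r rule: less_induct)
  case less
  show ?case
  proof (cases "l = r")
    case True
    then have E: "{(a,b) \<in> intervals P. l \<le> a \<and> b \<le> r} = {}" by (auto simp: intervals_def)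
    show ?thesis unfolding E using True by simp
  next
    case False
    define A where "A = {x\<in>P. l \<le> x \<and> x < r}"
    have fA: "finite A" using less.prems by (simp add: A_def)
    have lA: "l \<in> A" using less.prems False by (auto simp: A_def)
    define r' where "r' = Max A"
    have r'A: "r' \<in> A" using fA lA unfolding r'_def by (intro Max_in) auto
    have r'max: "\<And>x. x \<in> A \<Longrightarrow> x \<le> r'" using fA by (simp add: r'_def)
    have r'P: "r' \<in> P" "l \<le> r'" "r' < r" using r'A by (auto simp: A_def)
    have subs: "{x\<in>P. l \<le> x \<and> x < r'} \<subset> A" using r'A r'P by (auto simp: A_def)
    have lt: "card {x\<in>P. l \<le> x \<and> x < r'} < card {x\<in>P. l \<le> x \<and> x < r}"
      using psubset_card_mono[OF fA subs] by (simp add: A_def)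
    have IH: "(\<Sum>(a,b) \<in> {(a,b) \<in> intervals P. l \<le> a \<and> b \<le> r'}. b - a) = r' - l"
      using less.hyps[OF lt] less.prems r'P by auto
    have int: "(r', r) \<in> intervals P"
      unfolding intervals_def
    proof (simp add: r'P less.prems, intro ballI)
      fix x assume "x \<in> P"
      show "x \<le> r' \<or> r \<le> x"
      proof (cases "x < l")
        case True then show ?thesis using r'P by simp
      next
        case False then show ?thesis using r'max[of x] \<open>x \<in> P\<close> by (auto simp: A_def)
      qed
    qed
    have split: "{(a,b) \<in> intervals P. l \<le> a \<and> b \<le> r} =
        insert (r',r) {(a,b) \<in> intervals P. l \<le> a \<and> b \<le> r'}"
    proof (rule set_eqI, rule iffI)
      fix p assume p: "p \<in> {(a,b) \<in> intervals P. l \<le> a \<and> b \<le> r}"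
      obtain a b where ab: "p = (a,b)" by (cases p)
      have iv: "a \<in> P" "b \<in> P" "a < b" "\<forall>x\<in>P. x \<le> a \<or> b \<le> x" "l \<le> a" "b \<le> r"
        using p ab by (auto simp: intervals_def)
      show "p \<in> insert (r',r) {(a,b) \<in> intervals P. l \<le> a \<and> b \<le> r'}"
      proof (cases "b \<le> r'")
        case True then show ?thesis using p ab by auto
      next
        case False
        have "r' \<le> a" using iv(4) r'P(1) False by auto
        have "b = r"
        proof (rule ccontr)
          assume "b \<noteq> r"
          then have "b \<in> A" using iv by (auto simp: A_def)
          then show False using r'max False by auto
        qed
        moreover have "a \<le> r'" using r'max[of a] iv \<open>b = r\<close> by (auto simp: A_def)
        ultimately show ?thesis using ab \<open>r' \<le> a\<close> by auto
      qed
    next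
      fix p assume "p \<in> insert (r',r) {(a,b) \<in> intervals P. l \<le> a \<and> b \<le> r'}"
      then show "p \<in> {(a,b) \<in> intervals P. l \<le> a \<and> b \<le> r}"
        using int r'P by auto
    qed
    have fin: "finite {(a,b) \<in> intervals P. l \<le> a \<and> b \<le> r'}"
      using intervals_finite[OF less.prems(1)] by (rule finite_subset[rotated]) auto
    have notin: "(r',r) \<notin> {(a,b) \<in> intervals P. l \<le> a \<and> b \<le> r'}" using r'P by auto
    show ?thesis unfolding split using fin notin IH by simp
  qed
qed

lemma interval_len_bounds:
  assumes "is_partition P" "(a,b) \<in> intervals P"
  shows "minmesh P \<le> b - a \<and> b - a \<le> mesh P"
proof -
  have f: "finite ((\<lambda>(a, b). b - a) ` intervals P)"
    using assms(1) intervals_finite by (auto simp: is_partition_def)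
  have "b - a \<in> (\<lambda>(a, b). b - a) ` intervals P" using assms(2) by force
  then show ?thesis unfolding minmesh_def mesh_def using f by auto
qed

lemma sub_intervals_pos:
  assumes "is_partition P" "l \<in> P" "r \<in> P" "l < r"
  shows "{(a,b) \<in> intervals P. l \<le> a \<and> b \<le> r} \<noteq> {}"
proof
  assume E: "{(a,b) \<in> intervals P. l \<le> a \<and> b \<le> r} = {}"
  have "(\<Sum>(a,b) \<in> {(a,b) \<in> intervals P. l \<le> a \<and> b \<le> r}. b - a) = r - l"
    using intervals_sum[of P l r] assms by (auto simp: is_partition_def)
  then show False unfolding E using assms by simp
qed

lemma intervals_nonempty: "is_partition P \<Longrightarrow> intervals P \<noteq> {}"
  using sub_intervals_pos[of P 0 1] by (auto simp: is_partition_def)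

lemma minmesh_pos: assumes "is_partition P" shows "0 < minmesh P"
proof -
  obtain a b where "(a,b) \<in> intervals P" using intervals_nonempty[OF assms] by auto
  have f: "finite ((\<lambda>(a, b). b - a) ` intervals P)"
    using assms(1) intervals_finite by (auto simp: is_partition_def)
  have "minmesh P \<in> (\<lambda>(a, b). b - a) ` intervals P"
    unfolding minmesh_def using f intervals_nonempty[OF assms] by (intro Min_in) auto
  then show ?thesis by (auto simp: intervals_def)
qed

lemma gap_ge_minmesh:
  assumes "is_partition P" "l \<in> P" "r \<in> P" "l < r"
  shows "minmesh P \<le> r - l"
proof -
  obtain a b where ab: "(a,b) \<in> intervals P" "l \<le> a" "b \<le> r"
    using sub_intervals_pos[OF assms] by auto
  then show ?thesis using interval_len_bounds[OF assms(1) ab(1)] by linarith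
qed

lemma Ssum_eq:
  assumes "is_partition (\<pi> n)"
  shows "Ssum \<pi> n 1 l r = (\<Sum>(a,b) \<in> {(a,b) \<in> intervals (\<pi> n). l \<le> a \<and> b \<le> r}. (b-a)^2)"
  unfolding Ssum_def
proof (rule sum.cong[OF refl])
  fix p assume "p \<in> {(a,b) \<in> intervals (\<pi> n). l \<le> a \<and> b \<le> r}"
  then obtain a b where "p = (a,b)" "a \<in> \<pi> n" "b \<in> \<pi> n" by (auto simp: intervals_def)
  moreover have "a \<le> 1" "b \<le> 1" using calculation assms by (auto simp: is_partition_def)
  ultimately show "(case p of (a, b) \<Rightarrow> (incr 1 a b)\<^sup>2) = (case p of (a, b) \<Rightarrow> (b - a)\<^sup>2)"
    by (simp add: incr_def)
qed

lemma Ssum_bounds: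
  assumes "is_partition (\<pi> n)" "l \<in> \<pi> n" "r \<in> \<pi> n" "l \<le> r"
  shows "minmesh (\<pi> n) * (r-l) \<le> Ssum \<pi> n 1 l r \<and> Ssum \<pi> n 1 l r \<le> mesh (\<pi> n) * (r-l)"
proof -
  let ?S = "{(a,b) \<in> intervals (\<pi> n). l \<le> a \<and> b \<le> r}"
  have fin: "finite (\<pi> n)" using assms by (simp add: is_partition_def)
  have sum: "(\<Sum>(a,b) \<in> ?S. b - a) = r - l" using intervals_sum[OF fin assms(2-4)] .
  have "(\<Sum>(a,b) \<in> ?S. minmesh (\<pi> n) * (b - a)) \<le> (\<Sum>(a,b) \<in> ?S. (b-a)^2)"
  proof (rule sum_mono)
    fix p assume "p \<in> ?S"
    then obtain a b where ab: "p = (a,b)" "(a,b) \<in> intervals (\<pi> n)" by auto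
    have "minmesh (\<pi> n) \<le> b - a" "0 < b - a"
      using interval_len_bounds[OF assms(1) ab(2)] ab(2) by (auto simp: intervals_def)
    then show "(case p of (a, b) \<Rightarrow> minmesh (\<pi> n) * (b - a)) \<le> (case p of (a, b) \<Rightarrow> (b - a)\<^sup>2)"
      using ab by (simp add: power2_eq_square)
  qed
  moreover have "(\<Sum>(a,b) \<in> ?S. (b-a)^2) \<le> (\<Sum>(a,b) \<in> ?S. mesh (\<pi> n) * (b - a))"
  proof (rule sum_mono)
    fix p assume "p \<in> ?S"
    then obtain a b where ab: "p = (a,b)" "(a,b) \<in> intervals (\<pi> n)" by auto
    have "b - a \<le> mesh (\<pi> n)" "0 < b - a"
      using interval_len_bounds[OF assms(1) ab(2)] ab(2) by (auto simp: intervals_def)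
    then show "(case p of (a, b) \<Rightarrow> (b - a)\<^sup>2) \<le> (case p of (a, b) \<Rightarrow> mesh (\<pi> n) * (b - a))"
      using ab by (simp add: power2_eq_square)
  qed
  moreover have "(\<Sum>(a,b) \<in> ?S. c * (b - a)) = c * (r - l)" for c
    using sum by (simp add: sum_distrib_left[symmetric] case_prod_unfold)
  ultimately show ?thesis using Ssum_eq[of \<pi> n l r, OF assms(1)] by simp
qed

lemma mesh_refine:
  assumes P: "is_partition P" and Q: "is_partition Q" and sub: "P \<subseteq> Q"
    and M: "\<forall>(a,b)\<in>intervals P. card {x\<in>Q. a \<le> x \<and> x \<le> b} \<le> M"
  shows "mesh P \<le> real M * mesh Q"
proof -
  have f: "finite ((\<lambda>(a, b). b - a) ` intervals P)"
    using P intervals_finite by (auto simp: is_partition_def)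
  have "mesh P \<in> (\<lambda>(a, b). b - a) ` intervals P"
    unfolding mesh_def using f intervals_nonempty[OF P] by (intro Max_in) auto
  then obtain a b where ab: "(a,b) \<in> intervals P" "mesh P = b - a" by auto
  have abQ: "a \<in> Q" "b \<in> Q" "a \<le> b" using ab sub by (auto simp: intervals_def)
  let ?S = "{(c,d) \<in> intervals Q. a \<le> c \<and> d \<le> b}"
  have finQ: "finite Q" using Q by (simp add: is_partition_def)
  have finS: "finite ?S" using intervals_finite[OF finQ] by (rule finite_subset[rotated]) auto
  have sum: "(\<Sum>(c,d) \<in> ?S. d - c) = b - a" using intervals_sum[OF finQ abQ] .
  have "(\<Sum>(c,d) \<in> ?S. d - c) \<le> (\<Sum>(c,d) \<in> ?S. mesh Q)"
    by (rule sum_mono) (use interval_len_bounds[OF Q] in auto)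
  also have "\<dots> = real (card ?S) * mesh Q" by (simp add: case_prod_unfold)
  also have "real (card ?S) \<le> real M"
  proof -
    have inj: "inj_on fst ?S"
    proof (rule inj_onI)
      fix p q assume "p \<in> ?S" "q \<in> ?S" "fst p = fst q"
      then obtain c d d' where "p = (c,d)" "q = (c,d')" "(c,d) \<in> intervals Q" "(c,d') \<in> intervals Q"
        by (cases p, cases q) auto
      then show "p = q" unfolding intervals_def by force
    qed
    have "fst ` ?S \<subseteq> {x\<in>Q. a \<le> x \<and> x \<le> b}" by (auto simp: intervals_def)
    then have "card (fst ` ?S) \<le> card {x\<in>Q. a \<le> x \<and> x \<le> b}"
      using finQ by (intro card_mono) auto
    then have "card ?S \<le> M" using card_image[OF inj] M ab(1) by auto
    then show ?thesis by simp
  qed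
  then have "real (card ?S) * mesh Q \<le> real M * mesh Q"
    using minmesh_pos[OF Q] interval_len_bounds[OF Q] intervals_nonempty[OF Q]
    by (intro mult_right_mono) (auto, smt (verit))
  finally show ?thesis using sum ab by simp
qed

lemma alg_a:
  fixes lo hi d1 d2 u1 u2 :: real
  assumes "0 < d1" "0 < d2" "lo \<le> u1" "u1 \<le> hi" "lo \<le> u2" "u2 \<le> hi"
  shows "lo \<le> 1/(d1+d2) * (u1*d1*d2/d1 + u2*d2*d1/d2)"
    and "1/(d1+d2) * (u1*d1*d2/d1 + u2*d2*d1/d2) \<le> hi"
proof -
  have e: "1/(d1+d2) * (u1*d1*d2/d1 + u2*d2*d1/d2) = (u1*d2 + u2*d1)/(d1+d2)"
    using assms by (simp add: field_simps)
  have "lo*d2 \<le> u1*d2" "lo*d1 \<le> u2*d1"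
    using mult_right_mono[OF assms(3), of d2] mult_right_mono[OF assms(5), of d1] assms by auto
  then have "lo*(d1+d2) \<le> u1*d2 + u2*d1" by (simp add: algebra_simps)
  then show "lo \<le> 1/(d1+d2) * (u1*d1*d2/d1 + u2*d2*d1/d2)"
    unfolding e using assms by (simp add: pos_le_divide_eq)
  have "u1*d2 \<le> hi*d2" "u2*d1 \<le> hi*d1"
    using mult_right_mono[OF assms(4), of d2] mult_right_mono[OF assms(6), of d1] assms by auto
  then have "u1*d2 + u2*d1 \<le> hi*(d1+d2)" by (simp add: algebra_simps)
  then show "1/(d1+d2) * (u1*d1*d2/d1 + u2*d2*d1/d2) \<le> hi"
    unfolding e using assms by (simp add: pos_divide_le_eq)
qed

lemma psi_bound:
  assumes "tt1 \<sigma> < tt2 \<sigma>" "tt2 \<sigma> < tt3 \<sigma>" "mm \<le> tt2 \<sigma> - tt1 \<sigma>" "mm \<le> tt3 \<sigma> - tt2 \<sigma>" "0 < mm"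
  shows "\<bar>haar_psi \<sigma> x\<bar> \<le> sqrt (1/mm)"
proof -
  define d1 where "d1 = tt2 \<sigma> - tt1 \<sigma>"
  define d2 where "d2 = tt3 \<sigma> - tt2 \<sigma>"
  have d: "0 < d1" "0 < d2" "mm \<le> d1" "mm \<le> d2" "tt3 \<sigma> - tt1 \<sigma> = d1 + d2" "0 < mm"
    using assms by (auto simp: d1_def d2_def)
  have A: "d2 / (d1 * (d1+d2)) \<le> 1/mm"
  proof -
    have "d2 \<le> 1/d1 * (d1 * (d1+d2))" using d by simp
    then have "d2 / (d1 * (d1+d2)) \<le> 1/d1" using d by (subst pos_divide_le_eq) auto
    also have "\<dots> \<le> 1/mm" using d by (simp add: frac_le)
    finally show ?thesis .
  qed
  have B: "d1 / (d2 * (d1+d2)) \<le> 1/mm"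
  proof -
    have "d1 \<le> 1/d2 * (d2 * (d1+d2))" using d by simp
    then have "d1 / (d2 * (d1+d2)) \<le> 1/d2" using d by (subst pos_divide_le_eq) auto
    also have "\<dots> \<le> 1/mm" using d by (simp add: frac_le)
    finally show ?thesis .
  qed
  show ?thesis
    unfolding haar_psi_def d1_def[symmetric] d2_def[symmetric] d(5)
    using real_sqrt_le_mono[OF A] real_sqrt_le_mono[OF B] d by auto
qed

lemma bform_bound:
  assumes "0 < d1" "0 < d2" "lo \<le> u1" "u1 \<le> hi" "lo \<le> u2" "u2 \<le> hi"
    and "\<bar>p\<bar> \<le> P" and "d1 \<le> K"
  shows "\<bar>p * (u1 - u2) * sqrt (d1 * d2 / (d1 + d2))\<bar> \<le> P * (hi - lo) * sqrt K"
proof -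
  have "\<bar>u1 - u2\<bar> \<le> hi - lo" using assms by linarith
  moreover have "d1 * d2 / (d1 + d2) \<le> K"
  proof -
    have "d1 * d2 / (d1 + d2) \<le> d1" using assms by (simp add: field_simps)
    then show ?thesis using assms by linarith
  qed
  then have "sqrt (d1 * d2 / (d1 + d2)) \<le> sqrt K" by simp
  moreover have "0 \<le> sqrt (d1 * d2 / (d1 + d2))" using assms by simp
  ultimately show ?thesis using assms(7)
    by (simp add: abs_mult mult_mono' mult_mono)
qed

lemma triple_facts:
  assumes "\<tau> \<in> haar_triples \<pi> m"
  obtains b where "(tt1 \<tau>, b) \<in> intervals (\<pi> m)" "(tt2 \<tau>, tt3 \<tau>) \<in> intervals (\<pi> (Suc m))"
    "tt1 \<tau> < tt2 \<tau>" "tt3 \<tau> \<le> b"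
  using assms by (cases \<tau>) (auto simp: haar_triples_def tt1_def tt2_def tt3_def)

theorem mainTheorem6:
  fixes \<pi> :: "nat \<Rightarrow> real set"
  assumes "finitely_refining \<pi>"
  shows "(\<forall>n m \<tau>. 1 \<le> n \<and> m < n \<and> \<tau> \<in> haar_triples \<pi> m \<longrightarrow>
            minmesh (\<pi> n) \<le> acoef \<pi> n \<tau> 1 \<and> acoef \<pi> n \<tau> 1 \<le> mesh (\<pi> n))
       \<and> (\<forall>n m m' \<tau> \<sigma>. 1 \<le> n \<and> m < n \<and> m' < n \<and> \<tau> \<in> haar_triples \<pi> m \<and>
            \<sigma> \<in> haar_triples \<pi> m' \<and> (m, \<tau>) \<noteq> (m', \<sigma>) \<and>
            {tt1 \<tau><..<tt3 \<tau>} \<inter> {tt1 \<sigma><..<tt3 \<sigma>} = {} \<longrightarrow>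
            bcoef \<pi> n \<tau> \<sigma> 1 = 0)
       \<and> (balanced \<pi> \<longrightarrow>
           (\<exists>C::real. \<forall>n m m' \<tau> \<sigma>. 1 \<le> n \<and> m < n \<and> m' < n \<and> \<tau> \<in> haar_triples \<pi> m \<and>
              \<sigma> \<in> haar_triples \<pi> m' \<and> (m, \<tau>) \<noteq> (m', \<sigma>) \<and>
              {tt1 \<tau>..tt3 \<tau>} \<subseteq> {tt1 \<sigma>..tt3 \<sigma>} \<longrightarrow>
              \<bar>bcoef \<pi> n \<tau> \<sigma> 1\<bar> \<le>
                C * (mesh (\<pi> n) - minmesh (\<pi> n)) * sqrt (mesh (\<pi> m) / mesh (\<pi> m'))))"
proof -
  from assms have part: "\<And>n. is_partition (\<pi> n)" and mono: "\<And>n. \<pi> n \<subseteq> \<pi> (Suc n)"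
    by (auto simp: finitely_refining_def)
  from assms obtain M :: nat where M: "\<And>n. \<forall>(a, b) \<in> intervals (\<pi> n).
         card {x \<in> \<pi> (Suc n). a \<le> x \<and> x \<le> b} \<le> M"
    by (auto simp: finitely_refining_def)
  have chain: "\<And>m n. m \<le> n \<Longrightarrow> \<pi> m \<subseteq> \<pi> n"
    by (rule lift_Suc_mono_le[of \<pi>]) (use mono in auto)
  have T: "t1 \<in> \<pi> n \<and> t2 \<in> \<pi> n \<and> t3 \<in> \<pi> n \<and> t1 < t2 \<and> t2 < t3 \<and>
      (\<exists>b. (t1, b) \<in> intervals (\<pi> m) \<and> t3 \<le> b) \<and>
      minmesh (\<pi> n) \<le> Ssum \<pi> n 1 t1 t2 / (t2 - t1) \<and> Ssum \<pi> n 1 t1 t2 / (t2 - t1) \<le> mesh (\<pi> n) \<and>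
      minmesh (\<pi> n) \<le> Ssum \<pi> n 1 t2 t3 / (t3 - t2) \<and> Ssum \<pi> n 1 t2 t3 / (t3 - t2) \<le> mesh (\<pi> n)"
    if th: "\<tau> \<in> haar_triples \<pi> m" "m < n" "t1 = tt1 \<tau>" "t2 = tt2 \<tau>" "t3 = tt3 \<tau>" for \<tau> m n t1 t2 t3
  proof -
    obtain b where b: "(t1, b) \<in> intervals (\<pi> m)" "(t2, t3) \<in> intervals (\<pi> (Suc m))"
      "t1 < t2" "t3 \<le> b"
      using triple_facts[OF th(1)] th(3-5) by metis
    have "\<pi> m \<subseteq> \<pi> n" "\<pi> (Suc m) \<subseteq> \<pi> n" using chain th(2) by auto
    then have mem: "t1 \<in> \<pi> n" "t2 \<in> \<pi> n" "t3 \<in> \<pi> n" "t2 < t3"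
      using b by (auto simp: intervals_def)
    have S1: "minmesh (\<pi> n) * (t2-t1) \<le> Ssum \<pi> n 1 t1 t2 \<and> Ssum \<pi> n 1 t1 t2 \<le> mesh (\<pi> n) * (t2-t1)"
      using Ssum_bounds[of \<pi> n, OF part mem(1,2)] b(3) by simp
    have S2: "minmesh (\<pi> n) * (t3-t2) \<le> Ssum \<pi> n 1 t2 t3 \<and> Ssum \<pi> n 1 t2 t3 \<le> mesh (\<pi> n) * (t3-t2)"
      using Ssum_bounds[of \<pi> n, OF part mem(2,3)] mem(4) by simp
    have p1: "0 < t2 - t1" "0 < t3 - t2" using b mem by auto
    show ?thesis using mem b S1 S2 p1
      by (auto simp: pos_le_divide_eq pos_divide_le_eq)
  qed
  have P1: "\<forall>n m \<tau>. 1 \<le> n \<and> m < n \<and> \<tau> \<in> haar_triples \<pi> m \<longrightarrow>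
            minmesh (\<pi> n) \<le> acoef \<pi> n \<tau> 1 \<and> acoef \<pi> n \<tau> 1 \<le> mesh (\<pi> n)"
  proof (intro allI impI)
    fix n m \<tau> assume h: "1 \<le> n \<and> m < n \<and> \<tau> \<in> haar_triples \<pi> m"
    define t1 where "t1 = tt1 \<tau>"
    define t2 where "t2 = tt2 \<tau>"
    define t3 where "t3 = tt3 \<tau>"
    have t: "t1 < t2" "t2 < t3"
      "minmesh (\<pi> n) \<le> Ssum \<pi> n 1 t1 t2 / (t2 - t1)" "Ssum \<pi> n 1 t1 t2 / (t2 - t1) \<le> mesh (\<pi> n)"
      "minmesh (\<pi> n) \<le> Ssum \<pi> n 1 t2 t3 / (t3 - t2)" "Ssum \<pi> n 1 t2 t3 / (t3 - t2) \<le> mesh (\<pi> n)"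
      using T[of \<tau> m n t1 t2 t3] h t1_def t2_def t3_def by auto
    define d1 where "d1 = t2 - t1"
    define d2 where "d2 = t3 - t2"
    define u1 where "u1 = Ssum \<pi> n 1 t1 t2 / d1"
    define u2 where "u2 = Ssum \<pi> n 1 t2 t3 / d2"
    have d: "0 < d1" "0 < d2" using t by (auto simp: d1_def d2_def)
    have e: "acoef \<pi> n \<tau> 1 = 1/(d1+d2) * (u1*d1*d2/d1 + u2*d2*d1/d2)"
      unfolding acoef_def t1_def[symmetric] t2_def[symmetric] t3_def[symmetric] u1_def u2_def
      using d by (simp add: d1_def d2_def)
    show "minmesh (\<pi> n) \<le> acoef \<pi> n \<tau> 1 \<and> acoef \<pi> n \<tau> 1 \<le> mesh (\<pi> n)"
      unfolding e using alg_a[OF d, of "minmesh (\<pi> n)" u1 "mesh (\<pi> n)" u2] t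
      by (simp add: u1_def u2_def d1_def d2_def)
  qed
  have P2: "\<forall>n m m' \<tau> \<sigma>. 1 \<le> n \<and> m < n \<and> m' < n \<and> \<tau> \<in> haar_triples \<pi> m \<and>
            \<sigma> \<in> haar_triples \<pi> m' \<and> (m, \<tau>) \<noteq> (m', \<sigma>) \<and>
            {tt1 \<tau><..<tt3 \<tau>} \<inter> {tt1 \<sigma><..<tt3 \<sigma>} = {} \<longrightarrow>
            bcoef \<pi> n \<tau> \<sigma> 1 = 0"
  proof (intro allI impI)
    fix n m m' \<tau> \<sigma> assume h: "1 \<le> n \<and> m < n \<and> m' < n \<and> \<tau> \<in> haar_triples \<pi> m \<and>
            \<sigma> \<in> haar_triples \<pi> m' \<and> (m, \<tau>) \<noteq> (m', \<sigma>) \<and>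
            {tt1 \<tau><..<tt3 \<tau>} \<inter> {tt1 \<sigma><..<tt3 \<sigma>} = {}"
    have a: "tt1 \<tau> < tt3 \<tau>" "tt1 \<sigma> < tt3 \<sigma>" using T[of \<tau> m n] T[of \<sigma> m' n] h by force+
    have c: False if c1: "{tt1 x..tt3 x} \<subseteq> {tt1 y..tt3 y}" "tt1 x < tt3 x"
      and c3: "{tt1 x<..<tt3 x} \<inter> {tt1 y<..<tt3 y} = {}" for x y
    proof -
      have "(tt1 x + tt3 x)/2 \<in> {tt1 x<..<tt3 x} \<inter> {tt1 y<..<tt3 y}"
        using c1 \<open>tt1 x < tt3 x\<close> by auto
      then show False using c3 by auto
    qed
    show "bcoef \<pi> n \<tau> \<sigma> 1 = 0"
      unfolding bcoef_def using c[of \<tau> \<sigma>] c[of \<sigma> \<tau>] a h by (auto simp: Int_commute)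
  qed
  have P3: "balanced \<pi> \<longrightarrow>
           (\<exists>C::real. \<forall>n m m' \<tau> \<sigma>. 1 \<le> n \<and> m < n \<and> m' < n \<and> \<tau> \<in> haar_triples \<pi> m \<and>
              \<sigma> \<in> haar_triples \<pi> m' \<and> (m, \<tau>) \<noteq> (m', \<sigma>) \<and>
              {tt1 \<tau>..tt3 \<tau>} \<subseteq> {tt1 \<sigma>..tt3 \<sigma>} \<longrightarrow>
              \<bar>bcoef \<pi> n \<tau> \<sigma> 1\<bar> \<le>
                C * (mesh (\<pi> n) - minmesh (\<pi> n)) * sqrt (mesh (\<pi> m) / mesh (\<pi> m')))"
  proof
    assume "balanced \<pi>"
    then obtain B where B: "\<And>n. n \<ge> 1 \<Longrightarrow> mesh (\<pi> n) / minmesh (\<pi> n) \<le> B"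
      by (auto simp: balanced_def)
    have Bm: "mesh (\<pi> n) \<le> B * minmesh (\<pi> n)" if "n \<ge> 1" for n
      using B[OF that] minmesh_pos[OF part] by (simp add: pos_divide_le_eq)
    have mm_low: "mesh (\<pi> k) \<le> (real M * B) * minmesh (\<pi> (Suc k))" for k
    proof -
      have "mesh (\<pi> k) \<le> real M * mesh (\<pi> (Suc k))"
        using mesh_refine[OF part part mono M] .
      also have "\<dots> \<le> real M * (B * minmesh (\<pi> (Suc k)))"
        using Bm[of "Suc k"] by (intro mult_left_mono) auto
      finally show ?thesis by simp
    qed
    show "\<exists>C::real. \<forall>n m m' \<tau> \<sigma>. 1 \<le> n \<and> m < n \<and> m' < n \<and> \<tau> \<in> haar_triples \<pi> m \<and>
              \<sigma> \<in> haar_triples \<pi> m' \<and> (m, \<tau>) \<noteq> (m', \<sigma>) \<and>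
              {tt1 \<tau>..tt3 \<tau>} \<subseteq> {tt1 \<sigma>..tt3 \<sigma>} \<longrightarrow>
              \<bar>bcoef \<pi> n \<tau> \<sigma> 1\<bar> \<le>
                C * (mesh (\<pi> n) - minmesh (\<pi> n)) * sqrt (mesh (\<pi> m) / mesh (\<pi> m'))"
    proof (rule exI[of _ "sqrt (real M * B)"], intro allI impI)
      fix n m m' \<tau> \<sigma> assume h: "1 \<le> n \<and> m < n \<and> m' < n \<and> \<tau> \<in> haar_triples \<pi> m \<and>
              \<sigma> \<in> haar_triples \<pi> m' \<and> (m, \<tau>) \<noteq> (m', \<sigma>) \<and>
              {tt1 \<tau>..tt3 \<tau>} \<subseteq> {tt1 \<sigma>..tt3 \<sigma>}"
      define t1 where "t1 = tt1 \<tau>"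
      define t2 where "t2 = tt2 \<tau>"
      define t3 where "t3 = tt3 \<tau>"
      have t: "t1 < t2" "t2 < t3"
        "minmesh (\<pi> n) \<le> Ssum \<pi> n 1 t1 t2 / (t2 - t1)" "Ssum \<pi> n 1 t1 t2 / (t2 - t1) \<le> mesh (\<pi> n)"
        "minmesh (\<pi> n) \<le> Ssum \<pi> n 1 t2 t3 / (t3 - t2)" "Ssum \<pi> n 1 t2 t3 / (t3 - t2) \<le> mesh (\<pi> n)"
        "\<exists>b. (t1, b) \<in> intervals (\<pi> m) \<and> t3 \<le> b"
        using T[of \<tau> m n t1 t2 t3] h t1_def t2_def t3_def by auto
      obtain b where b: "(t1, b) \<in> intervals (\<pi> m)" "t3 \<le> b" using t(7) by blast
      have d1K: "t2 - t1 \<le> mesh (\<pi> m)"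
        using interval_len_bounds[OF part b(1)] b(2) t(2) by linarith
      obtain b' where s: "(tt1 \<sigma>, b') \<in> intervals (\<pi> m')"
        "(tt2 \<sigma>, tt3 \<sigma>) \<in> intervals (\<pi> (Suc m'))" "tt1 \<sigma> < tt2 \<sigma>" "tt3 \<sigma> \<le> b'"
        using triple_facts[of \<sigma> \<pi> m'] h by metis
      let ?mm = "minmesh (\<pi> (Suc m'))"
      have s1: "tt1 \<sigma> \<in> \<pi> (Suc m')" "tt2 \<sigma> \<in> \<pi> (Suc m')" "tt2 \<sigma> < tt3 \<sigma>"
        using s mono by (auto simp: intervals_def)
      have s2: "?mm \<le> tt2 \<sigma> - tt1 \<sigma>" using gap_ge_minmesh[OF part s1(1,2) s(3)] .
      have s3: "?mm \<le> tt3 \<sigma> - tt2 \<sigma>" using interval_len_bounds[OF part s(2)] by simp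
      have mmpos: "0 < ?mm" using minmesh_pos[OF part] .
      have psi: "\<bar>haar_psi \<sigma> t1\<bar> \<le> sqrt (1/?mm)"
        using psi_bound[OF s(3) s1(3) s2 s3 mmpos] .
      have e: "bcoef \<pi> n \<tau> \<sigma> 1 = haar_psi \<sigma> t1 * (Ssum \<pi> n 1 t1 t2 / (t2 - t1) - Ssum \<pi> n 1 t2 t3 / (t3 - t2))
           * sqrt ((t2 - t1) * (t3 - t2) / ((t2 - t1) + (t3 - t2)))"
        using h unfolding bcoef_def bform_def t1_def t2_def t3_def by simp
      have bb: "\<bar>bcoef \<pi> n \<tau> \<sigma> 1\<bar> \<le> sqrt (1/?mm) * (mesh (\<pi> n) - minmesh (\<pi> n)) * sqrt (mesh (\<pi> m))"
        unfolding e by (rule bform_bound) (use t psi d1K in auto)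
      have mpos: "0 < mesh (\<pi> m')"
        using minmesh_pos[OF part, of m'] interval_len_bounds[OF part s(1)] by linarith
      have Mpos: "0 \<le> real M * B"
      proof -
        have "0 < mesh (\<pi> m')" by (rule mpos)
        then show ?thesis using mm_low[of m'] mmpos
          by (smt (verit) mult_nonneg_nonpos2 mult_nonpos_nonneg)
      qed
      have "1/?mm \<le> real M * B / mesh (\<pi> m')"
        using mm_low[of m'] mpos mmpos by (simp add: field_simps)
      then have "sqrt (1/?mm) * sqrt (mesh (\<pi> m)) \<le> sqrt (real M * B / mesh (\<pi> m')) * sqrt (mesh (\<pi> m))"
        using d1K t(1) by (intro mult_right_mono) auto
      also have "\<dots> = sqrt (real M * B) * sqrt (mesh (\<pi> m) / mesh (\<pi> m'))"
        by (simp add: real_sqrt_mult[symmetric] real_sqrt_divide[symmetric])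
      finally have q: "sqrt (1/?mm) * sqrt (mesh (\<pi> m)) \<le> sqrt (real M * B) * sqrt (mesh (\<pi> m) / mesh (\<pi> m'))" .
      have hl: "0 \<le> mesh (\<pi> n) - minmesh (\<pi> n)" using t(3,4) by linarith
      have "sqrt (1/?mm) * (mesh (\<pi> n) - minmesh (\<pi> n)) * sqrt (mesh (\<pi> m))
          = (sqrt (1/?mm) * sqrt (mesh (\<pi> m))) * (mesh (\<pi> n) - minmesh (\<pi> n))" by simp
      also have "\<dots> \<le> (sqrt (real M * B) * sqrt (mesh (\<pi> m) / mesh (\<pi> m'))) * (mesh (\<pi> n) - minmesh (\<pi> n))"
        using q hl by (rule mult_right_mono)
      finally show "\<bar>bcoef \<pi> n \<tau> \<sigma> 1\<bar> \<le> sqrt (real M * B) * (mesh (\<pi> n) - minmesh (\<pi> n)) * sqrt (mesh (\<pi> m) / mesh (\<pi> m'))"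
        using bb by (simp add: mult_ac)
    qed
  qed
  show ?thesis using P1 P2 P3 by blast
qed

end
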